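(* Consider the optimization problem $\mathcal{P}_3$ with Lagrangian $h$ and multipliers $\theta_k,\Gamma_{k,l},\eta_{k,i\to l},\beta$ described in the context. The receivers, the Lagrange multiplier $\beta$ and the precoders given by $$V_{k,i\to l}=\alpha_{k,l}\,\mathbf{p}_k^H\mathbf{h}_{k,i}^H\,T_{k,i\to l}^{-1},$$ $$\beta=\frac{1}{E_{tx}}\sum_{k=1}^K\sum_{l=1}^L\sum_{i=l}^L\eta_{k,i\to l}\,b_{k,i\to l}\,|V_{k,i\to l}|^2,$$ $$\mathbf{p}_k=\Big[\beta\mathbf{I}+\sum_{l=1}^L\sum_{i=l}^L\sum_{j=l}^L\alpha_{k,j}\eta_{k,i\to l}b_{k,i\to l}\mathbf{h}_{k,i}^H|V_{k,i\to l}|^2\mathbf{h}_{k,i}+\sum_{t=1,t\ne k}^{K}\sum_{l=1}^L\sum_{i=l}^L\eta_{t,i\to l}b_{t,i\to l}\mathbf{h}_{t,i}^H|V_{t,i\to l}|^2\mathbf{h}_{t,i}\Big]^{-1}\Big[\sum_{l=1}^L\sum_{i=l}^L\eta_{k,i\to l}b_{k,i\to l}\alpha_{k,l}\mathbf{h}_{k,i}^H V_{k,i\to l}^{*}\Big]$$ satisfy the KKT conditions of $\mathcal{P}_3$.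
   Context: A base station with $M$ antennas serves $K$ clusters of $L$ single-antenna users each; user $i$ of cluster $k$ has channel row vector $\mathbf{h}_{k,i}\in\mathbb{C}^{1\times M}$. Power fractions satisfy $\alpha_{k,l}>0$, $\sum_{l=1}^L\alpha_{k,l}=1$. The precoder is $\mathbf{P}=[\mathbf{p}_1,\dots,\mathbf{p}_K]\in\mathbb{C}^{M\times K}$ with total power budget $E_{tx}>0$. For $1\le l\le i\le L$ define $r_{k,i\to l}=\sum_{j=l+1}^{L}\alpha_{k,j}|\mathbf{h}_{k,i}\mathbf{p}_k|^2+\sum_{t\ne k}|\mathbf{h}_{k,i}\mathbf{p}_t|^2+1$ and $T_{k,i\to l}=\alpha_{k,l}|\mathbf{h}_{k,i}\mathbf{p}_k|^2+r_{k,i\to l}$. For scalar receivers $V_{k,i\to l}\in\mathbb{C}$ define the MSE $\varepsilon_{k,i\to l}=|V_{k,i\to l}|^2T_{k,i\to l}+\alpha_{k,l}-2\,\mathrm{Re}\{\alpha_{k,l}V_{k,i\to l}\mathbf{h}_{k,i}\mathbf{p}_k\}$ and, for weights $b_{k,i\to l}>0$, the augmented weighted MSE $\xi_{k,i\to l}=b_{k,i\to l}\varepsilon_{k,i\to l}-\log(\alpha_{k,l}b_{k,i\to l})$. Problem $\mathcal{P}_3$: minimize $\bar c$ over $\mathbf{P}$, $\{\xi_{k,l}\}$, $\bar c$, $\{V_{k,i\to l}\}$, $\{b_{k,i\to l}\}$ subject to $\sum_{l=1}^L\xi_{k,l}\le\bar c$ for all $k$; $\xi_{k,i\to l}\le\xi_{k,l}$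 for all $k$ and $l\le i\le L$; $\xi_{k,l}\le\xi^{th}_{k,l}$ for all $k,l$ (given thresholds); $\mathrm{Tr}(\mathbf{P}\mathbf{P}^H)\le E_{tx}$. Its Lagrangian is $h=\bar c-\sum_k\theta_k\bar c+\sum_{k,l}\theta_k\xi_{k,l}+\sum_{k,l}\Gamma_{k,l}(\xi_{k,l}-\xi^{th}_{k,l})+\beta(\mathrm{Tr}(\mathbf{P}\mathbf{P}^H)-E_{tx})+\sum_k\sum_{l=1}^L\sum_{i=l}^L\eta_{k,i\to l}(\xi_{k,i\to l}-\xi_{k,l})$, with nonnegative multipliers $\theta_k,\Gamma_{k,l},\eta_{k,i\to l},\beta$. KKT conditions comprise stationarity of $h$ (complex derivatives with respect to conjugated variables), primal feasibility, dual nonnegativity and complementary slackness. *)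

theory Defs
  imports "HOL-Analysis.Analysis"
begin

text \<open>Indices are 0-based: clusters k < K, users l, i < L, antennas = index type 'm.
  Triple-indexed quantities (receivers V, weights b, multipliers eta) are indexed by (k, i, l),
  standing for the paper's k, i -> l with l <= i.\<close>

text \<open>Wirtinger derivative with respect to the conjugated variable, for a real-valued
  function f: g is the derivative of f w.r.t. conj z at z iff the real Frechet
  derivative of f at z is dz |-> 2 Re (conj g * dz).\<close>
definition has_conj_deriv :: "(complex \<Rightarrow> real) \<Rightarrow> complex \<Rightarrow> complex \<Rightarrow> bool" where
  "has_conj_deriv f g z \<longleftrightarrow> (f has_derivative (\<lambda>dz. 2 * Re (cnj g * dz))) (at z)"

definition has_conj_gradient ::
    "(complex^'m \<Rightarrow> real) \<Rightarrow> complex^'m \<Rightarrow> complex^'m \<Rightarrow> bool" where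
  "has_conj_gradient f g z \<longleftrightarrow>
     (f has_derivative (\<lambda>dz. 2 * Re (\<Sum>m\<in>UNIV. cnj (g $ m) * dz $ m))) (at z)"

definition rowmul :: "complex^'m \<Rightarrow> complex^'m \<Rightarrow> complex" where
  "rowmul h p = (\<Sum>m\<in>UNIV. h $ m * p $ m)"

text \<open>The M x M matrix h^H h for a row vector h.\<close>
definition outerH :: "complex^'m \<Rightarrow> complex^'m^'m" where
  "outerH h = (\<chi> r c. cnj (h $ r) * h $ c)"

definition cmat_scale :: "complex \<Rightarrow> complex^'m^'n \<Rightarrow> complex^'m^'n" where
  "cmat_scale c A = (\<chi> r s. c * A $ r $ s)"

text \<open>r_{k,i->l} (0-based: j ranges over l < j < L).\<close>
definition rterm :: "nat \<Rightarrow> nat \<Rightarrow> (nat \<Rightarrow> nat \<Rightarrow> real) \<Rightarrow> (nat \<Rightarrow> nat \<Rightarrow> complex^'m)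
    \<Rightarrow> (nat \<Rightarrow> complex^'m) \<Rightarrow> nat \<Rightarrow> nat \<Rightarrow> nat \<Rightarrow> real" where
  "rterm K L \<alpha> H P k i l =
     (\<Sum>j\<in>{l<..<L}. \<alpha> k j * (cmod (rowmul (H k i) (P k)))^2)
     + (\<Sum>t\<in>{..<K} - {k}. (cmod (rowmul (H k i) (P t)))^2) + 1"

definition Tterm :: "nat \<Rightarrow> nat \<Rightarrow> (nat \<Rightarrow> nat \<Rightarrow> real) \<Rightarrow> (nat \<Rightarrow> nat \<Rightarrow> complex^'m)
    \<Rightarrow> (nat \<Rightarrow> complex^'m) \<Rightarrow> nat \<Rightarrow> nat \<Rightarrow> nat \<Rightarrow> real" where
  "Tterm K L \<alpha> H P k i l =
     \<alpha> k l * (cmod (rowmul (H k i) (P k)))^2 + rterm K L \<alpha> H P k i l"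

definition mse :: "nat \<Rightarrow> nat \<Rightarrow> (nat \<Rightarrow> nat \<Rightarrow> real) \<Rightarrow> (nat \<Rightarrow> nat \<Rightarrow> complex^'m)
    \<Rightarrow> (nat \<Rightarrow> complex^'m) \<Rightarrow> (nat \<times> nat \<times> nat \<Rightarrow> complex) \<Rightarrow> nat \<Rightarrow> nat \<Rightarrow> nat \<Rightarrow> real" where
  "mse K L \<alpha> H P V k i l =
     (cmod (V (k,i,l)))^2 * Tterm K L \<alpha> H P k i l + \<alpha> k l
     - 2 * Re (complex_of_real (\<alpha> k l) * V (k,i,l) * rowmul (H k i) (P k))"

definition awmse :: "nat \<Rightarrow> nat \<Rightarrow> (nat \<Rightarrow> nat \<Rightarrow> real) \<Rightarrow> (nat \<Rightarrow> nat \<Rightarrow> complex^'m)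
    \<Rightarrow> (nat \<Rightarrow> complex^'m) \<Rightarrow> (nat \<times> nat \<times> nat \<Rightarrow> complex) \<Rightarrow> (nat \<times> nat \<times> nat \<Rightarrow> real)
    \<Rightarrow> nat \<Rightarrow> nat \<Rightarrow> nat \<Rightarrow> real" where
  "awmse K L \<alpha> H P V b k i l =
     b (k,i,l) * mse K L \<alpha> H P V k i l - ln (\<alpha> k l * b (k,i,l))"

definition lagrangian :: "nat \<Rightarrow> nat \<Rightarrow> (nat \<Rightarrow> nat \<Rightarrow> real) \<Rightarrow> (nat \<Rightarrow> nat \<Rightarrow> complex^'m)
    \<Rightarrow> real \<Rightarrow> (nat \<Rightarrow> nat \<Rightarrow> real)
    \<Rightarrow> (nat \<Rightarrow> real) \<Rightarrow> (nat \<Rightarrow> nat \<Rightarrow> real) \<Rightarrow> (nat \<times> nat \<times> nat \<Rightarrow> real) \<Rightarrow> real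
    \<Rightarrow> real \<Rightarrow> (nat \<Rightarrow> nat \<Rightarrow> real) \<Rightarrow> (nat \<Rightarrow> complex^'m)
    \<Rightarrow> (nat \<times> nat \<times> nat \<Rightarrow> complex) \<Rightarrow> (nat \<times> nat \<times> nat \<Rightarrow> real) \<Rightarrow> real" where
  "lagrangian K L \<alpha> H Etx xith \<theta> \<Gamma> \<eta> \<beta> cbar \<xi> P V b =
     cbar - (\<Sum>k<K. \<theta> k * cbar)
     + (\<Sum>k<K. \<Sum>l<L. \<theta> k * \<xi> k l)
     + (\<Sum>k<K. \<Sum>l<L. \<Gamma> k l * (\<xi> k l - xith k l))
     + \<beta> * ((\<Sum>k<K. (norm (P k))^2) - Etx)
     + (\<Sum>k<K. \<Sum>l<L. \<Sum>i\<in>{l..<L}.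
          \<eta> (k,i,l) * (awmse K L \<alpha> H P V b k i l - \<xi> k l))"

end

theory Submission
  imports Defs
begin


lemma scR_comp: "(r *\<^sub>R (x::complex^'m)) $ i = complex_of_real r * x $ i"
  by (subst vector_scaleR_component) (rule scaleR_conv_of_real)

lemma inner_cplx: "(x::complex) \<bullet> y = Re (cnj x * y)"
  by (simp add: inner_complex_def)

lemma mv_sum: "(\<Sum>i\<in>S. M i) *v x = (\<Sum>i\<in>S. M i *v x)"
  by (induct S rule: infinite_finite_induct) (auto simp: matrix_vector_mult_add_rdistrib)

lemma cmat_scale_mv: "cmat_scale (complex_of_real r) M *v x = r *\<^sub>R (M *v x)"
  unfolding vec_eq_iff scR_comp by (simp add: cmat_scale_def matrix_vector_mult_def sum_distrib_left mult.assoc)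

lemma mat_mv: "mat (complex_of_real r) *v x = r *\<^sub>R x"
proof -
  have "\<And>i. (\<Sum>j\<in>UNIV. (if i = j then complex_of_real r else 0) * x $ j) = complex_of_real r * x $ i"
    by (simp add: if_distrib[of "\<lambda>c. c * _"] cong: if_cong)
  then show ?thesis unfolding vec_eq_iff scR_comp by (simp add: mat_def matrix_vector_mult_def)
qed

lemma inner_cvec: "(x::complex^'m) \<bullet> y = Re (\<Sum>m\<in>UNIV. cnj (x$m) * y$m)"
  by (simp add: inner_vec_def inner_complex_def Re_sum)

lemma outerH_form: "(outerH h *v x) \<bullet> d = rowmul h x \<bullet> rowmul h d"
proof -
  have "(outerH h *v x) $ m = cnj (h$m) * rowmul h x" for m
    by (simp add: outerH_def matrix_vector_mult_def rowmul_def sum_distrib_left mult.assoc)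
  then have "\<And>m. cnj ((outerH h *v x) $ m) * d $ m = cnj (rowmul h x) * (h$m * d$m)"
    by simp
  then have "(outerH h *v x) \<bullet> d = Re (\<Sum>m\<in>UNIV. cnj (rowmul h x) * (h$m * d$m))"
    by (simp only: inner_cvec)
  also have "\<dots> = rowmul h x \<bullet> rowmul h d"
    by (simp only: inner_cplx rowmul_def sum_distrib_left)
  finally show ?thesis .
qed

lemma cvec_form: "(z *s (\<chi> r. cnj (h $ r))) \<bullet> d = Re (cnj z * rowmul h d)"
  by (simp add: inner_cvec rowmul_def sum_distrib_left mult.assoc)

lemma rowmul_linear: "bounded_linear (rowmul h)"
proof -
  have "linear (rowmul h)"
    by (rule linearI) (simp_all add: rowmul_def sum.distrib distrib_left scR_comp sum_distrib_left mult.left_commute scaleR_sum_right)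
  then show ?thesis by (simp add: linear_conv_bounded_linear)
qed

lemma D1: "((\<lambda>p. (cmod (rowmul h p))^2) has_derivative (\<lambda>d. 2 * (rowmul h p0 \<bullet> rowmul h d))) (at p0)"
  using has_derivative_compose[OF bounded_linear_imp_has_derivative[OF rowmul_linear] has_derivative_sqnorm_at, where x=p0 and s=UNIV]
  by simp


locale kkt =
  fixes K L :: nat
    and \<alpha> :: "nat \<Rightarrow> nat \<Rightarrow> real"
    and H :: "nat \<Rightarrow> nat \<Rightarrow> complex^'m"
    and Etx :: real
    and xith :: "nat \<Rightarrow> nat \<Rightarrow> real"
    and \<theta> :: "nat \<Rightarrow> real" and \<Gamma> :: "nat \<Rightarrow> nat \<Rightarrow> real"
    and \<eta> :: "nat \<times> nat \<times> nat \<Rightarrow> real" and \<beta> :: real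
    and cbar :: real and \<xi> :: "nat \<Rightarrow> nat \<Rightarrow> real"
    and P :: "nat \<Rightarrow> complex^'m"
    and V :: "nat \<times> nat \<times> nat \<Rightarrow> complex"
    and b :: "nat \<times> nat \<times> nat \<Rightarrow> real"
  assumes alpha_pos: "\<And>k l. k < K \<Longrightarrow> l < L \<Longrightarrow> \<alpha> k l > 0"
    and Etx_pos: "Etx > 0"
    and b_pos: "\<And>k i l. k < K \<Longrightarrow> l \<le> i \<Longrightarrow> i < L \<Longrightarrow> b (k,i,l) > 0"
    and eta_nonneg: "\<And>k i l. k < K \<Longrightarrow> l \<le> i \<Longrightarrow> i < L \<Longrightarrow> \<eta> (k,i,l) \<ge> 0"
    and V_def: "\<And>k i l. k < K \<Longrightarrow> l \<le> i \<Longrightarrow> i < L \<Longrightarrow>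
        V (k,i,l) = complex_of_real (\<alpha> k l) * cnj (rowmul (H k i) (P k))
                    / complex_of_real (Tterm K L \<alpha> H P k i l)"
    and beta_def: "\<beta> = (1 / Etx) *
        (\<Sum>k<K. \<Sum>l<L. \<Sum>i\<in>{l..<L}. \<eta> (k,i,l) * b (k,i,l) * (cmod (V (k,i,l)))^2)"
    and P_def: "\<And>k. k < K \<Longrightarrow>
        P k = matrix_inv
          (mat (complex_of_real \<beta>)
           + (\<Sum>l<L. \<Sum>i\<in>{l..<L}. \<Sum>j\<in>{l..<L}.
                cmat_scale (complex_of_real (\<alpha> k j * \<eta> (k,i,l) * b (k,i,l) * (cmod (V (k,i,l)))^2))
                (outerH (H k i)))
           + (\<Sum>t\<in>{..<K} - {k}. \<Sum>l<L. \<Sum>i\<in>{l..<L}.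
                cmat_scale (complex_of_real (\<eta> (t,i,l) * b (t,i,l) * (cmod (V (t,i,l)))^2))
                (outerH (H t i))))
        *v (\<Sum>l<L. \<Sum>i\<in>{l..<L}.
              (complex_of_real (\<eta> (k,i,l) * b (k,i,l) * \<alpha> k l) * cnj (V (k,i,l)))
              *s (\<chi> r. cnj (H k i $ r)))"
begin

definition "Am k = (mat (complex_of_real \<beta>)
           + (\<Sum>l<L. \<Sum>i\<in>{l..<L}. \<Sum>j\<in>{l..<L}.
                cmat_scale (complex_of_real (\<alpha> k j * \<eta> (k,i,l) * b (k,i,l) * (cmod (V (k,i,l)))^2))
                (outerH (H k i)))
           + (\<Sum>t\<in>{..<K} - {k}. \<Sum>l<L. \<Sum>i\<in>{l..<L}.
                cmat_scale (complex_of_real (\<eta> (t,i,l) * b (t,i,l) * (cmod (V (t,i,l)))^2))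
                (outerH (H t i))))"

definition "cv k = (\<Sum>l<L. \<Sum>i\<in>{l..<L}.
              (complex_of_real (\<eta> (k,i,l) * b (k,i,l) * \<alpha> k l) * cnj (V (k,i,l)))
              *s (\<chi> r. cnj (H k i $ r)))"

lemma P_eq: "k < K \<Longrightarrow> P k = matrix_inv (Am k) *v cv k"
  using P_def unfolding Am_def cv_def by blast

lemma T_ge1:
  assumes "k < K" "l \<le> i" "i < L"
  shows "Tterm K L \<alpha> H P k i l \<ge> 1"
proof -
  have "\<alpha> k l > 0" using assms alpha_pos by simp
  moreover have "(\<Sum>j\<in>{l<..<L}. \<alpha> k j * (cmod (rowmul (H k i) (P k)))^2) \<ge> 0"
    using assms alpha_pos by (intro sum_nonneg) (simp add: less_imp_le)
  moreover have "(\<Sum>t\<in>{..<K} - {k}. (cmod (rowmul (H k i) (P t)))^2) \<ge> 0"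
    by (intro sum_nonneg) simp
  ultimately show ?thesis unfolding Tterm_def rterm_def
    by (smt (verit) mult_nonneg_nonneg zero_le_power2)
qed

lemma VT:
  assumes "k < K" "l \<le> i" "i < L"
  shows "(cmod (V (k,i,l)))^2 * Tterm K L \<alpha> H P k i l = \<alpha> k l * Re (V (k,i,l) * rowmul (H k i) (P k))"
    and "cnj (V (k,i,l)) * complex_of_real (Tterm K L \<alpha> H P k i l) = complex_of_real (\<alpha> k l) * rowmul (H k i) (P k)"
proof -
  define T where "T = Tterm K L \<alpha> H P k i l"
  define z where "z = rowmul (H k i) (P k)"
  have T1: "T \<ge> 1" using T_ge1 assms T_def by simp
  have V: "V (k,i,l) = complex_of_real (\<alpha> k l / T) * cnj z"
    using V_def[OF assms] unfolding T_def z_def by simp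
  have "cmod (V (k,i,l)) = \<bar>\<alpha> k l / T\<bar> * cmod z" unfolding V by (simp add: norm_mult norm_divide)
  moreover have "V (k,i,l) * z = complex_of_real (\<alpha> k l / T * (cmod z)^2)"
  proof -
    have "cnj z * z = complex_of_real ((cmod z)^2)" by (metis complex_norm_square mult.commute of_real_power)
    then show ?thesis unfolding V by (simp add: mult.assoc)
  qed
  ultimately have a: "cmod (V (k,i,l)) = \<alpha> k l / T * cmod z" and b: "Re (V (k,i,l) * z) = \<alpha> k l / T * (cmod z)^2"
    using T1 alpha_pos[of k l] assms by auto
  have "(cmod (V (k,i,l)))^2 * T = \<alpha> k l * (\<alpha> k l / T * (cmod z)^2)"
    unfolding a using T1 by (simp add: power2_eq_square field_simps)
  then show "(cmod (V (k,i,l)))^2 * Tterm K L \<alpha> H P k i l = \<alpha> k l * Re (V (k,i,l) * rowmul (H k i) (P k))"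
    unfolding T_def[symmetric] z_def[symmetric] b .
  show "cnj (V (k,i,l)) * complex_of_real (Tterm K L \<alpha> H P k i l) = complex_of_real (\<alpha> k l) * rowmul (H k i) (P k)"
    using T1 unfolding T_def[symmetric] z_def[symmetric] V by simp
qed

lemma beta_nonneg: "\<beta> \<ge> 0"
  unfolding beta_def using Etx_pos eta_nonneg b_pos
  by (intro mult_nonneg_nonneg sum_nonneg) (auto simp: less_imp_le)

lemma Aform: "(Am k *v x) \<bullet> d = \<beta> * (x \<bullet> d)
   + (\<Sum>l<L. \<Sum>i\<in>{l..<L}. \<Sum>j\<in>{l..<L}. (\<alpha> k j * \<eta> (k,i,l) * b (k,i,l) * (cmod (V (k,i,l)))^2)
        * (rowmul (H k i) x \<bullet> rowmul (H k i) d))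
   + (\<Sum>t\<in>{..<K} - {k}. \<Sum>l<L. \<Sum>i\<in>{l..<L}. (\<eta> (t,i,l) * b (t,i,l) * (cmod (V (t,i,l)))^2)
        * (rowmul (H t i) x \<bullet> rowmul (H t i) d))"
  unfolding Am_def
  by (simp only: matrix_vector_mult_add_rdistrib mv_sum cmat_scale_mv mat_mv inner_add_left
        inner_sum_left inner_scaleR_left outerH_form)

lemma cform: "cv k \<bullet> d = (\<Sum>l<L. \<Sum>i\<in>{l..<L}. (\<eta> (k,i,l) * b (k,i,l) * \<alpha> k l) * Re (V (k,i,l) * rowmul (H k i) d))"
  unfolding cv_def by (simp add: inner_sum_left cvec_form mult.assoc)

lemma b_nonneg: "k < K \<Longrightarrow> l \<le> i \<Longrightarrow> i < L \<Longrightarrow> b (k,i,l) \<ge> 0"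
  using b_pos[of k l i] by simp

lemma coef_nonneg:
  assumes "t < K" "l < L" "i \<in> {l..<L}"
  shows "\<eta> (t,i,l) * b (t,i,l) * (cmod (V (t,i,l)))^2 \<ge> 0"
  using assms eta_nonneg[of t l i] b_pos[of t l i] by simp

lemma cv0: assumes True: "\<beta> = 0" and k: "k < K" shows "cv k = 0"
proof -
  have S: "(\<Sum>t<K. \<Sum>l<L. \<Sum>i\<in>{l..<L}. \<eta> (t,i,l) * b (t,i,l) * (cmod (V (t,i,l)))^2) = 0"
    using True beta_def Etx_pos by simp
  have z: "\<eta> (t,i,l) * b (t,i,l) * (cmod (V (t,i,l)))^2 = 0" if "t < K" "l < L" "i \<in> {l..<L}" for t l i
  proof -
    have "(\<Sum>l<L. \<Sum>i\<in>{l..<L}. \<eta> (t,i,l) * b (t,i,l) * (cmod (V (t,i,l)))^2) = 0"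
      using S that coef_nonneg
      by (subst (asm) sum_nonneg_eq_0_iff) (auto intro!: sum_nonneg)
    then have "(\<Sum>i\<in>{l..<L}. \<eta> (t,i,l) * b (t,i,l) * (cmod (V (t,i,l)))^2) = 0"
      using that coef_nonneg
      by (subst (asm) sum_nonneg_eq_0_iff) (auto intro!: sum_nonneg)
    then show ?thesis
      using that coef_nonneg
      by (subst (asm) sum_nonneg_eq_0_iff) (auto intro!: sum_nonneg)
  qed
  show "cv k = 0" unfolding cv_def
  proof (intro sum.neutral ballI)
    fix l i assume "l \<in> {..<L}" "i \<in> {l..<L}"
    then have "\<eta> (k,i,l) = 0 \<or> V (k,i,l) = 0" using z[of k l i] k b_pos[of k l i] by auto
    then show "(complex_of_real (\<eta> (k,i,l) * b (k,i,l) * \<alpha> k l) * cnj (V (k,i,l))) *s (\<chi> r. cnj (H k i $ r)) = 0"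
      by auto
  qed
qed

lemma Aeq: assumes k: "k < K" shows "Am k *v P k = cv k"
proof (cases "\<beta> = 0")
  case True
  then show ?thesis using P_eq[OF k] cv0[OF True k] by simp
next
  case False
  then have bpos: "\<beta> > 0" using beta_nonneg by simp
  have ker: "x = 0" if "Am k *v x = 0" for x
  proof -
    have "0 = (Am k *v x) \<bullet> x" using that by simp
    also have "\<dots> \<ge> \<beta> * (x \<bullet> x)" unfolding Aform
      using k alpha_pos eta_nonneg b_nonneg
      by (intro add_increasing2 sum_nonneg mult_nonneg_nonneg)
         (auto simp: less_imp_le intro!: mult_nonneg_nonneg)
    finally have "x \<bullet> x \<le> 0" using bpos by (simp add: mult_le_0_iff)
    then show ?thesis by (metis inner_eq_zero_iff inner_ge_zero order_antisym)
  qed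
  have "inj ((*v) (Am k))"
  proof (rule injI)
    fix x y assume "Am k *v x = Am k *v y"
    then have "Am k *v (x - y) = 0" by (simp add: matrix_vector_mult_diff_distrib)
    then show "x = y" using ker[of "x - y"] by simp
  qed
  then have "det (Am k) \<noteq> 0"
    using det_nz_iff_inj_gen[of "(*v) (Am k)"] by simp
  then have "invertible (Am k)" by (simp add: invertible_det_nz)
  then have "Am k ** matrix_inv (Am k) = mat 1"
    unfolding invertible_def matrix_inv_def by (rule someI_ex[THEN conjunct1])
  then show ?thesis using P_eq[OF k] by (simp add: matrix_vector_mul_assoc)
qed

lemma Dzero: assumes k: "k < K"
  shows "\<beta> * (P k \<bullet> d)
   + (\<Sum>l<L. \<Sum>i\<in>{l..<L}. \<Sum>j\<in>{l..<L}. (\<alpha> k j * \<eta> (k,i,l) * b (k,i,l) * (cmod (V (k,i,l)))^2)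
        * (rowmul (H k i) (P k) \<bullet> rowmul (H k i) d))
   + (\<Sum>t\<in>{..<K} - {k}. \<Sum>l<L. \<Sum>i\<in>{l..<L}. (\<eta> (t,i,l) * b (t,i,l) * (cmod (V (t,i,l)))^2)
        * (rowmul (H t i) (P k) \<bullet> rowmul (H t i) d))
   - (\<Sum>l<L. \<Sum>i\<in>{l..<L}. (\<eta> (k,i,l) * b (k,i,l) * \<alpha> k l) * Re (V (k,i,l) * rowmul (H k i) d)) = 0"
  using arg_cong[OF Aeq[OF k], of "\<lambda>v. v \<bullet> d"] unfolding Aform cform by simp

lemma swapK: "(\<Sum>k<K. \<Sum>t\<in>{..<K}-{k}. F k t) = (\<Sum>t<K. \<Sum>k\<in>{..<K}-{t}. F k t :: real)"
proof -
  have e: "(\<Sum>t\<in>{..<K}-{k}. G t) = (\<Sum>t<K. if t = k then 0 else G t)" for k and G :: "nat \<Rightarrow> real"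
    by (simp add: sum.If_cases Diff_eq)
  show ?thesis unfolding e
    by (subst sum.swap) (simp add: eq_commute)
qed

lemma per_user:
  assumes "k < K" "l < L" "i \<in> {l..<L}"
  shows "(\<Sum>j\<in>{l..<L}. (\<alpha> k j * \<eta> (k,i,l) * b (k,i,l) * (cmod (V (k,i,l)))^2)
        * (cmod (rowmul (H k i) (P k)))^2)
     + \<eta> (k,i,l) * b (k,i,l) * (cmod (V (k,i,l)))^2 * (\<Sum>s\<in>{..<K}-{k}. (cmod (rowmul (H k i) (P s)))^2)
     - (\<eta> (k,i,l) * b (k,i,l) * \<alpha> k l) * Re (V (k,i,l) * rowmul (H k i) (P k))
     = - (\<eta> (k,i,l) * b (k,i,l) * (cmod (V (k,i,l)))^2)"
proof -
  define w where "w = \<eta> (k,i,l) * b (k,i,l) * (cmod (V (k,i,l)))^2"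
  define h where "h = (cmod (rowmul (H k i) (P k)))^2"
  define S where "S = (\<Sum>s\<in>{..<K}-{k}. (cmod (rowmul (H k i) (P s)))^2)"
  have ins: "{l..<L} = insert l {l<..<L}" using assms by auto
  have "(\<Sum>j\<in>{l..<L}. (\<alpha> k j * \<eta> (k,i,l) * b (k,i,l) * (cmod (V (k,i,l)))^2) * h)
      = w * (\<alpha> k l * h + (\<Sum>j\<in>{l<..<L}. \<alpha> k j * h))"
    unfolding ins w_def by (simp add: sum_distrib_left sum_distrib_right algebra_simps)
  moreover have "Tterm K L \<alpha> H P k i l = \<alpha> k l * h + (\<Sum>j\<in>{l<..<L}. \<alpha> k j * h) + S + 1"
    unfolding Tterm_def rterm_def h_def S_def by simp
  moreover have "w * Tterm K L \<alpha> H P k i l = (\<eta> (k,i,l) * b (k,i,l) * \<alpha> k l) * Re (V (k,i,l) * rowmul (H k i) (P k))"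
    using VT(1)[of k l i] assms unfolding w_def by (simp add: mult.assoc)
  ultimately show ?thesis unfolding w_def[symmetric] h_def[symmetric] S_def[symmetric]
    by (simp add: algebra_simps)
qed

lemma power_id: "\<beta> * (\<Sum>k<K. (norm (P k))^2) = \<beta> * Etx"
proof -
  define w where "w t i l = \<eta> (t,i,l) * b (t,i,l) * (cmod (V (t,i,l)))^2" for t i l
  define hh where "hh t i s = (cmod (rowmul (H t i) (P s)))^2" for t i s
  define A1 where "A1 k = (\<Sum>l<L. \<Sum>i\<in>{l..<L}. \<Sum>j\<in>{l..<L}. (\<alpha> k j * \<eta> (k,i,l) * b (k,i,l) * (cmod (V (k,i,l)))^2)
        * hh k i k)" for k
  define A2 where "A2 k = (\<Sum>t\<in>{..<K} - {k}. \<Sum>l<L. \<Sum>i\<in>{l..<L}. w t i l * hh t i k)" for k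
  define A3 where "A3 k = (\<Sum>l<L. \<Sum>i\<in>{l..<L}. (\<eta> (k,i,l) * b (k,i,l) * \<alpha> k l) * Re (V (k,i,l) * rowmul (H k i) (P k)))" for k
  have D: "\<beta> * (norm (P k))^2 + A1 k + A2 k - A3 k = 0" if "k < K" for k
    using Dzero[OF that, of "P k"] unfolding A1_def A2_def A3_def w_def hh_def
    by (simp add: dot_square_norm)
  have "(\<Sum>k<K. \<beta> * (norm (P k))^2 + A1 k + A2 k - A3 k) = 0"
    using D by simp
  then have E: "\<beta> * (\<Sum>k<K. (norm (P k))^2) + (\<Sum>k<K. A1 k) + (\<Sum>k<K. A2 k) - (\<Sum>k<K. A3 k) = 0"
    by (simp add: sum.distrib sum_subtractf sum_distrib_left)
  have "(\<Sum>k<K. A2 k) = (\<Sum>t<K. \<Sum>k\<in>{..<K} - {t}. \<Sum>l<L. \<Sum>i\<in>{l..<L}. w t i l * hh t i k)"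
    unfolding A2_def by (rule swapK)
  also have "\<dots> = (\<Sum>t<K. \<Sum>l<L. \<Sum>i\<in>{l..<L}. w t i l * (\<Sum>s\<in>{..<K} - {t}. hh t i s))"
  proof (rule sum.cong[OF refl])
    fix t
    have "(\<Sum>k\<in>{..<K} - {t}. \<Sum>l<L. \<Sum>i\<in>{l..<L}. w t i l * hh t i k)
        = (\<Sum>l<L. \<Sum>k\<in>{..<K} - {t}. \<Sum>i\<in>{l..<L}. w t i l * hh t i k)"
      by (rule sum.swap)
    also have "\<dots> = (\<Sum>l<L. \<Sum>i\<in>{l..<L}. \<Sum>k\<in>{..<K} - {t}. w t i l * hh t i k)"
      by (rule sum.cong[OF refl], rule sum.swap)
    also have "\<dots> = (\<Sum>l<L. \<Sum>i\<in>{l..<L}. w t i l * (\<Sum>s\<in>{..<K} - {t}. hh t i s))"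
      by (simp only: sum_distrib_left)
    finally show "(\<Sum>k\<in>{..<K} - {t}. \<Sum>l<L. \<Sum>i\<in>{l..<L}. w t i l * hh t i k)
        = (\<Sum>l<L. \<Sum>i\<in>{l..<L}. w t i l * (\<Sum>s\<in>{..<K} - {t}. hh t i s))" .
  qed
  finally have A2s: "(\<Sum>k<K. A2 k) = \<dots>" .
  have "(\<Sum>k<K. A1 k) + (\<Sum>k<K. A2 k) - (\<Sum>k<K. A3 k) =
      (\<Sum>k<K. \<Sum>l<L. \<Sum>i\<in>{l..<L}.
        (\<Sum>j\<in>{l..<L}. (\<alpha> k j * \<eta> (k,i,l) * b (k,i,l) * (cmod (V (k,i,l)))^2) * hh k i k)
        + w k i l * (\<Sum>s\<in>{..<K} - {k}. hh k i s)
        - (\<eta> (k,i,l) * b (k,i,l) * \<alpha> k l) * Re (V (k,i,l) * rowmul (H k i) (P k)))"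
    unfolding A2s A1_def A3_def by (simp add: sum.distrib sum_subtractf)
  also have "\<dots> = (\<Sum>k<K. \<Sum>l<L. \<Sum>i\<in>{l..<L}. - w k i l)"
    by (intro sum.cong refl) (use per_user in \<open>auto simp: w_def hh_def\<close>)
  finally have F: "(\<Sum>k<K. A1 k) + (\<Sum>k<K. A2 k) - (\<Sum>k<K. A3 k) = - (\<Sum>k<K. \<Sum>l<L. \<Sum>i\<in>{l..<L}. w k i l)"
    by (simp add: sum_negf)
  have G: "(\<Sum>k<K. \<Sum>l<L. \<Sum>i\<in>{l..<L}. w k i l) = \<beta> * Etx"
    using beta_def Etx_pos unfolding w_def by simp
  show ?thesis using E F G by linarith
qed

lemma Dq: "((\<lambda>p. (cmod (rowmul h ((P(k0:=p)) s)))^2) has_derivative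
   (\<lambda>d. if s = k0 then 2 * (rowmul h (P k0) \<bullet> rowmul h d) else 0)) (at (P k0))"
  by (cases "s = k0") (simp_all add: D1)

lemma Dre: "((\<lambda>p. Re (c * rowmul h ((P(k0:=p)) s))) has_derivative
   (\<lambda>d. if s = k0 then Re (c * rowmul h d) else 0)) (at (P k0))"
proof (cases "s = k0")
  case True
  have "((\<lambda>p. Re (c * rowmul h p)) has_derivative (\<lambda>d. Re (c * rowmul h d))) (at (P k0))"
    by (intro has_derivative_Re has_derivative_mult_right bounded_linear_imp_has_derivative rowmul_linear)
  then show ?thesis using True by simp
qed simp

lemma Dn: "((\<lambda>p. (norm ((P(k0:=p)) s))^2) has_derivative
   (\<lambda>d. if s = k0 then 2 * (P k0 \<bullet> d) else 0)) (at (P k0))"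
  using has_derivative_sqnorm_at[of "P k0"] by (cases "s = k0") simp_all

lemma Dterm: "((\<lambda>p. \<eta> (k,i,l) * (awmse K L \<alpha> H (P(k0:=p)) V b k i l - \<xi> k l)) has_derivative
   (\<lambda>d. \<eta> (k,i,l) * (b (k,i,l) * ((cmod (V (k,i,l)))^2 *
      ((\<alpha> k l + (\<Sum>j\<in>{l<..<L}. \<alpha> k j)) * (if k = k0 then 2 * (rowmul (H k i) (P k0) \<bullet> rowmul (H k i) d) else 0)
       + (if k \<noteq> k0 \<and> k0 < K then 2 * (rowmul (H k i) (P k0) \<bullet> rowmul (H k i) d) else 0))
      - 2 * (if k = k0 then Re (complex_of_real (\<alpha> k l) * V (k,i,l) * rowmul (H k i) d) else 0)))))
   (at (P k0))"
  unfolding awmse_def mse_def Tterm_def rterm_def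
  apply (rule has_derivative_eq_rhs)
   apply (rule has_derivative_mult_right has_derivative_diff has_derivative_add has_derivative_sum has_derivative_const Dq Dre)+
  apply (rule ext)
  apply (simp add: sum.delta algebra_simps sum_distrib_right)
  done

lemma sum_ins: "l < L \<Longrightarrow> sum f {l..<L} = f l + sum f {l<..<L}"
proof -
  assume "l < L"
  then have "{l..<L} = insert l {l<..<L}" by auto
  then show ?thesis by simp
qed

lemma Dfinal: assumes k0: "k0 < K"
  shows "\<beta> * (2 * (P k0 \<bullet> x)) +
         (\<Sum>i<K. \<Sum>ia<L. \<Sum>ib = ia..<L. \<eta> (i, ib, ia) * (b (i, ib, ia) * ((cmod (V (i, ib, ia)))\<^sup>2 *
            ((\<alpha> i ia + sum (\<alpha> i) {ia<..<L}) *
               (if i = k0 then 2 * (rowmul (H i ib) (P k0) \<bullet> rowmul (H i ib) x) else 0) +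
             (if i \<noteq> k0 then 2 * (rowmul (H i ib) (P k0) \<bullet> rowmul (H i ib) x) else 0)) -
            2 * (if i = k0 then Re (complex_of_real (\<alpha> i ia) * V (i, ib, ia) * rowmul (H i ib) x) else 0)))) = 0"
    (is "_ + (\<Sum>k<K. \<Sum>l<L. \<Sum>i = l..<L. ?T k l i) = 0")
proof -
  define g where "g t i = rowmul (H t i) (P k0) \<bullet> rowmul (H t i) x" for t i
  define X1 where "X1 = (\<Sum>l<L. \<Sum>i\<in>{l..<L}. \<Sum>j\<in>{l..<L}. (\<alpha> k0 j * \<eta> (k0,i,l) * b (k0,i,l) * (cmod (V (k0,i,l)))^2) * g k0 i)"
  define X2 where "X2 t = (\<Sum>l<L. \<Sum>i\<in>{l..<L}. (\<eta> (t,i,l) * b (t,i,l) * (cmod (V (t,i,l)))^2) * g t i)" for t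
  define X3 where "X3 = (\<Sum>l<L. \<Sum>i\<in>{l..<L}. (\<eta> (k0,i,l) * b (k0,i,l) * \<alpha> k0 l) * Re (V (k0,i,l) * rowmul (H k0 i) x))"
  have Z: "\<beta> * (P k0 \<bullet> x) + X1 + (\<Sum>t\<in>{..<K} - {k0}. X2 t) - X3 = 0"
    using Dzero[OF k0, of x] unfolding X1_def X2_def X3_def g_def .
  have per: "(\<Sum>l<L. \<Sum>i = l..<L. ?T k l i) = (if k = k0 then 2 * X1 - 2 * X3 else 2 * X2 k)" for k
  proof (cases "k = k0")
    case True
    have "(\<Sum>l<L. \<Sum>i = l..<L. ?T k l i) = (\<Sum>l<L. \<Sum>i = l..<L.
       2 * (\<Sum>j\<in>{l..<L}. (\<alpha> k0 j * \<eta> (k0,i,l) * b (k0,i,l) * (cmod (V (k0,i,l)))^2) * g k0 i)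
       - 2 * ((\<eta> (k0,i,l) * b (k0,i,l) * \<alpha> k0 l) * Re (V (k0,i,l) * rowmul (H k0 i) x)))"
    proof (intro sum.cong refl)
      fix l i assume "l \<in> {..<L}" "i \<in> {l..<L}"
      then have "l < L" by simp
      show "?T k l i = 2 * (\<Sum>j\<in>{l..<L}. (\<alpha> k0 j * \<eta> (k0,i,l) * b (k0,i,l) * (cmod (V (k0,i,l)))^2) * g k0 i)
       - 2 * ((\<eta> (k0,i,l) * b (k0,i,l) * \<alpha> k0 l) * Re (V (k0,i,l) * rowmul (H k0 i) x))"
        using True unfolding sum_ins[OF \<open>l < L\<close>] g_def
        by (simp add: sum_distrib_right sum_distrib_left algebra_simps)
    qed
    also have "\<dots> = 2 * X1 - 2 * X3"
      unfolding X1_def X3_def by (simp add: sum_subtractf sum_distrib_left)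
    finally show ?thesis using True by simp
  next
    case False
    have "(\<Sum>l<L. \<Sum>i = l..<L. ?T k l i) = (\<Sum>l<L. \<Sum>i = l..<L. 2 * ((\<eta> (k,i,l) * b (k,i,l) * (cmod (V (k,i,l)))^2) * g k i))"
      using False by (intro sum.cong refl) (simp add: g_def algebra_simps)
    also have "\<dots> = 2 * X2 k"
      unfolding X2_def by (simp add: sum_distrib_left)
    finally show ?thesis using False by simp
  qed
  have "(\<Sum>k<K. \<Sum>l<L. \<Sum>i = l..<L. ?T k l i) = (\<Sum>k<K. (if k = k0 then 2 * X1 - 2 * X3 else 2 * X2 k))"
    using per by simp
  also have "\<dots> = (2 * X1 - 2 * X3) + (\<Sum>k\<in>{..<K} - {k0}. (if k = k0 then 2 * X1 - 2 * X3 else 2 * X2 k))"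
    using k0 by (subst sum.remove[of _ k0]) auto
  also have "(\<Sum>k\<in>{..<K} - {k0}. (if k = k0 then 2 * X1 - 2 * X3 else 2 * X2 k)) = 2 * (\<Sum>k\<in>{..<K} - {k0}. X2 k)"
    by (simp add: sum_distrib_left)
  finally show ?thesis using Z by simp
qed

lemma gradP: assumes k0: "k0 < K"
  shows "has_conj_gradient (\<lambda>p. lagrangian K L \<alpha> H Etx xith \<theta> \<Gamma> \<eta> \<beta> cbar \<xi> (P(k0 := p)) V b) 0 (P k0)"
  unfolding has_conj_gradient_def lagrangian_def
  apply (rule has_derivative_eq_rhs)
   apply (rule Dterm has_derivative_mult_right has_derivative_diff has_derivative_add has_derivative_sum has_derivative_const Dn)+
  apply (rule ext)
  apply (simp add: sum.delta k0 Dfinal)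
  done

lemma DV_term:
  assumes v: "k < K" "l \<le> i" "i < L"
  shows "((\<lambda>v. \<eta> (k',i',l') * (awmse K L \<alpha> H P (V((k,i,l) := v)) b k' i' l' - \<xi> k' l')) has_derivative (\<lambda>_. 0))
         (at (V (k,i,l)))"
proof (cases "(k',i',l') = (k,i,l)")
  case True
  then have e: "k' = k" "i' = i" "l' = l" by auto
  define T where "T = Tterm K L \<alpha> H P k i l"
  define z where "z = rowmul (H k i) (P k)"
  have sq: "((\<lambda>v. (cmod v)^2) has_derivative (\<lambda>d. 2 *\<^sub>R (V (k,i,l) \<bullet> d))) (at (V (k,i,l)))"
    by (rule has_derivative_sqnorm_at)
  have key: "T * (V (k,i,l) \<bullet> d) = Re (complex_of_real (\<alpha> k l) * d * z)" for d
  proof -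
    have "T * (V (k,i,l) \<bullet> d) = Re ((cnj (V (k,i,l)) * complex_of_real T) * d)"
      by (simp add: inner_cplx algebra_simps)
    also have "\<dots> = Re (complex_of_real (\<alpha> k l) * d * z)"
      using VT(2)[OF v] unfolding T_def z_def by (simp add: algebra_simps)
    finally show ?thesis .
  qed
  have keyR: "2 *\<^sub>R (V (k,i,l) \<bullet> d) * T = 2 * Re (complex_of_real (\<alpha> k l) * d * z)" for d
    using key[of d] by (simp add: algebra_simps)
  show ?thesis unfolding e awmse_def mse_def T_def[symmetric] z_def[symmetric] fun_upd_same
    apply (rule has_derivative_eq_rhs)
     apply (rule sq has_derivative_Re has_derivative_mult_right has_derivative_mult_left has_derivative_diff
        has_derivative_add has_derivative_const has_derivative_ident)+
    apply (rule ext)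
    apply (simp only: keyR)
    apply simp
    done
next
  case False
  then have ne: "(V((k,i,l):=v)) (k',i',l') = V (k',i',l')" for v using False by auto
  have "(\<lambda>v. \<eta> (k',i',l') * (awmse K L \<alpha> H P (V((k,i,l) := v)) b k' i' l' - \<xi> k' l')) =
     (\<lambda>v. \<eta> (k',i',l') * (awmse K L \<alpha> H P V b k' i' l' - \<xi> k' l'))"
    by (simp only: awmse_def mse_def ne)
  then show ?thesis by simp
qed

lemma gradV:
  assumes v: "k < K" "l \<le> i" "i < L"
  shows "has_conj_deriv (\<lambda>v. lagrangian K L \<alpha> H Etx xith \<theta> \<Gamma> \<eta> \<beta> cbar \<xi> P (V((k,i,l) := v)) b) 0 (V (k,i,l))"
  unfolding has_conj_deriv_def lagrangian_def
  apply (rule has_derivative_eq_rhs)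
   apply (rule DV_term[OF v] has_derivative_mult_right has_derivative_diff has_derivative_add has_derivative_sum has_derivative_const)+
  apply (rule ext)
  apply simp
  done

lemma main:
  shows "\<beta> \<ge> 0
    \<and> (\<Sum>k<K. (norm (P k))^2) \<le> Etx
    \<and> \<beta> * ((\<Sum>k<K. (norm (P k))^2) - Etx) = 0
    \<and> (\<forall>k i l. k < K \<and> l \<le> i \<and> i < L \<longrightarrow>
          has_conj_deriv
            (\<lambda>v. lagrangian K L \<alpha> H Etx xith \<theta> \<Gamma> \<eta> \<beta> cbar \<xi> P (V((k,i,l) := v)) b)
            0 (V (k,i,l)))
    \<and> (\<forall>k. k < K \<longrightarrow>
          has_conj_gradient
            (\<lambda>p. lagrangian K L \<alpha> H Etx xith \<theta> \<Gamma> \<eta> \<beta> cbar \<xi> (P(k := p)) V b)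
            0 (P k))"
proof -
  have pw: "(\<Sum>k<K. (norm (P k))^2) \<le> Etx \<and> \<beta> * ((\<Sum>k<K. (norm (P k))^2) - Etx) = 0"
  proof (cases "\<beta> = 0")
    case True
    then have "P k = 0" if "k < K" for k using P_eq[OF that] cv0[OF True that] by simp
    then show ?thesis using True Etx_pos by simp
  next
    case False
    then show ?thesis using power_id by (simp add: right_diff_distrib)
  qed
  show ?thesis using beta_nonneg pw gradV gradP by blast
qed

end


theorem theorem1:
  fixes K L :: nat
    and \<alpha> :: "nat \<Rightarrow> nat \<Rightarrow> real"
    and H :: "nat \<Rightarrow> nat \<Rightarrow> complex^'m"
    and Etx :: real
    and xith :: "nat \<Rightarrow> nat \<Rightarrow> real"
    and \<theta> :: "nat \<Rightarrow> real" and \<Gamma> :: "nat \<Rightarrow> nat \<Rightarrow> real"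
    and \<eta> :: "nat \<times> nat \<times> nat \<Rightarrow> real" and \<beta> :: real
    and cbar :: real and \<xi> :: "nat \<Rightarrow> nat \<Rightarrow> real"
    and P :: "nat \<Rightarrow> complex^'m"
    and V :: "nat \<times> nat \<times> nat \<Rightarrow> complex"
    and b :: "nat \<times> nat \<times> nat \<Rightarrow> real"
  assumes alpha_pos: "\<And>k l. k < K \<Longrightarrow> l < L \<Longrightarrow> \<alpha> k l > 0"
    and alpha_sum: "\<And>k. k < K \<Longrightarrow> (\<Sum>l<L. \<alpha> k l) = 1"
    and Etx_pos: "Etx > 0"
    and b_pos: "\<And>k i l. k < K \<Longrightarrow> l \<le> i \<Longrightarrow> i < L \<Longrightarrow> b (k,i,l) > 0"
    and theta_nonneg: "\<And>k. k < K \<Longrightarrow> \<theta> k \<ge> 0"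
    and Gamma_nonneg: "\<And>k l. k < K \<Longrightarrow> l < L \<Longrightarrow> \<Gamma> k l \<ge> 0"
    and eta_nonneg: "\<And>k i l. k < K \<Longrightarrow> l \<le> i \<Longrightarrow> i < L \<Longrightarrow> \<eta> (k,i,l) \<ge> 0"
    and V_def: "\<And>k i l. k < K \<Longrightarrow> l \<le> i \<Longrightarrow> i < L \<Longrightarrow>
        V (k,i,l) = complex_of_real (\<alpha> k l) * cnj (rowmul (H k i) (P k))
                    / complex_of_real (Tterm K L \<alpha> H P k i l)"
    and beta_def: "\<beta> = (1 / Etx) *
        (\<Sum>k<K. \<Sum>l<L. \<Sum>i\<in>{l..<L}. \<eta> (k,i,l) * b (k,i,l) * (cmod (V (k,i,l)))^2)"
    and P_def: "\<And>k. k < K \<Longrightarrow>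
        P k = matrix_inv
          (mat (complex_of_real \<beta>)
           + (\<Sum>l<L. \<Sum>i\<in>{l..<L}. \<Sum>j\<in>{l..<L}.
                cmat_scale (complex_of_real (\<alpha> k j * \<eta> (k,i,l) * b (k,i,l) * (cmod (V (k,i,l)))^2))
                (outerH (H k i)))
           + (\<Sum>t\<in>{..<K} - {k}. \<Sum>l<L. \<Sum>i\<in>{l..<L}.
                cmat_scale (complex_of_real (\<eta> (t,i,l) * b (t,i,l) * (cmod (V (t,i,l)))^2))
                (outerH (H t i))))
        *v (\<Sum>l<L. \<Sum>i\<in>{l..<L}.
              (complex_of_real (\<eta> (k,i,l) * b (k,i,l) * \<alpha> k l) * cnj (V (k,i,l)))
              *s (\<chi> r. cnj (H k i $ r)))"
  shows "\<beta> \<ge> 0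
    \<and> (\<Sum>k<K. (norm (P k))^2) \<le> Etx
    \<and> \<beta> * ((\<Sum>k<K. (norm (P k))^2) - Etx) = 0
    \<and> (\<forall>k i l. k < K \<and> l \<le> i \<and> i < L \<longrightarrow>
          has_conj_deriv
            (\<lambda>v. lagrangian K L \<alpha> H Etx xith \<theta> \<Gamma> \<eta> \<beta> cbar \<xi> P (V((k,i,l) := v)) b)
            0 (V (k,i,l)))
    \<and> (\<forall>k. k < K \<longrightarrow>
          has_conj_gradient
            (\<lambda>p. lagrangian K L \<alpha> H Etx xith \<theta> \<Gamma> \<eta> \<beta> cbar \<xi> (P(k := p)) V b)
            0 (P k))"
  proof -
  interpret S: kkt K L \<alpha> H Etx xith \<theta> \<Gamma> \<eta> \<beta> cbar \<xi> P V b
    by (rule kkt.intro) (fact alpha_pos Etx_pos b_pos eta_nonneg V_def beta_def P_def)+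
  show ?thesis by (rule S.main)
qed

end
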